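(* For $i=1,2$ let $\pi^{(i)}$, $\sigma^{(i)}$, $\pi'^{(i)}$ be formal Poisson deformations of $\pi_0$, $\sigma_0$, $\pi_0'$ respectively, and let $\Phi^{(i)}:(\mathcal{A}[[\lambda]],\pi^{(i)})\to(\mathcal{B}[[\lambda]],\sigma^{(i)})$ and $\Phi'^{(i)}:(\mathcal{A}'[[\lambda]],\pi'^{(i)})\to(\mathcal{B}[[\lambda]],\sigma^{(i)})$ be $\mathbb{K}[[\lambda]]$-linear Poisson morphisms with zeroth-order terms $\phi_0$ and $\phi_0'$ respectively, whose images Poisson commute with respect to $\sigma^{(i)}$. Suppose there are $\mathbb{K}[[\lambda]]$-linear Poisson isomorphisms $\psi:(\mathcal{A}[[\lambda]],\pi^{(1)})\to(\mathcal{A}[[\lambda]],\pi^{(2)})$ and $\Psi:(\mathcal{B}[[\lambda]],\sigma^{(1)})\to(\mathcal{B}[[\lambda]],\sigma^{(2)})$ with $\Phi^{(2)}\circ\psi=\Psi\circ\Phi^{(1)}$. Then there is a Poisson isomorphism $\psi':(\mathcal{A}'[[\lambda]],\pi'^{(1)})\to(\mathcal{A}'[[\lambda]],\pi'^{(2)})$ such that $\Phi'^{(2)}\circ\psi'=\Psi\circ\Phi'^{(1)}$.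
   Context: $\mathbb{K}$ is a field of characteristic zero. $\mathcal{A},\mathcal{B}$ are commutative $\mathbb{K}$-algebras with Poisson brackets $\pi_0$, $\sigma_0$, and $\phi_0:\mathcal{A}\to\mathcal{B}$ is a Poisson morphism. $\mathcal{A}'$ is the Poisson commutant $\{b\in\mathcal{B}:\sigma_0(b,\phi_0(a))=0\ \forall a\}$ with the induced bracket $\pi_0'$, and $\phi_0':\mathcal{A}'\to\mathcal{B}$ is the inclusion. A formal Poisson deformation of a Poisson bracket on an algebra $\mathcal{R}$ is a $\mathbb{K}[[\lambda]]$-bilinear Poisson bracket on $\mathcal{R}[[\lambda]]$ (with $\lambda$-linearly extended product) whose zeroth-order term is the given bracket. Poisson morphisms preserve both products and brackets. *)

theory Defs
  imports Main "HOL.Vector_Spaces"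
begin

text \<open>A commutative (not necessarily unital) K-algebra is a type of class comm_ring
  together with a scalar multiplication by the field 'k making it a K-module such that
  multiplication is K-bilinear.\<close>

definition kalg :: "('k::field_char_0 \<Rightarrow> 'a::comm_ring \<Rightarrow> 'a) \<Rightarrow> bool" where
  "kalg sc \<longleftrightarrow> module sc \<and> (\<forall>c x y. sc c (x * y) = sc c x * y)"

definition klinear_on ::
  "('k::field_char_0 \<Rightarrow> 'a::comm_ring \<Rightarrow> 'a) \<Rightarrow> ('k \<Rightarrow> 'b::comm_ring \<Rightarrow> 'b) \<Rightarrow> 'a set \<Rightarrow> ('a \<Rightarrow> 'b) \<Rightarrow> bool" where
  "klinear_on sc1 sc2 S f \<longleftrightarrow>
     (\<forall>x\<in>S. \<forall>y\<in>S. f (x + y) = f x + f y) \<and> (\<forall>c. \<forall>x\<in>S. f (sc1 c x) = sc2 c (f x))"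

definition kbilinear_on ::
  "('k::field_char_0 \<Rightarrow> 'a::comm_ring \<Rightarrow> 'a) \<Rightarrow> 'a set \<Rightarrow> ('a \<Rightarrow> 'a \<Rightarrow> 'a) \<Rightarrow> bool" where
  "kbilinear_on sc S p \<longleftrightarrow>
     (\<forall>x\<in>S. \<forall>y\<in>S. \<forall>z\<in>S. p (x + y) z = p x z + p y z \<and> p x (y + z) = p x y + p x z) \<and>
     (\<forall>c. \<forall>x\<in>S. \<forall>y\<in>S. p (sc c x) y = sc c (p x y) \<and> p x (sc c y) = sc c (p x y))"

definition poisson_bracket_on ::
  "'x set \<Rightarrow> ('x \<Rightarrow> 'x \<Rightarrow> 'x) \<Rightarrow> ('x \<Rightarrow> 'x \<Rightarrow> 'x) \<Rightarrow> ('x \<Rightarrow> 'x \<Rightarrow> 'x) \<Rightarrow> 'x \<Rightarrow> bool" where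
  "poisson_bracket_on S add mul br z \<longleftrightarrow>
     (\<forall>x\<in>S. \<forall>y\<in>S. br x y \<in> S) \<and>
     (\<forall>x\<in>S. \<forall>y\<in>S. \<forall>w\<in>S. br (add x y) w = add (br x w) (br y w)) \<and>
     (\<forall>x\<in>S. \<forall>y\<in>S. add (br x y) (br y x) = z) \<and>
     (\<forall>x\<in>S. \<forall>y\<in>S. \<forall>w\<in>S.
        add (add (br x (br y w)) (br y (br w x))) (br w (br x y)) = z) \<and>
     (\<forall>x\<in>S. \<forall>y\<in>S. \<forall>w\<in>S. br x (mul y w) = add (mul (br x y) w) (mul y (br x w)))"

definition poisson_algebra :: "('k::field_char_0 \<Rightarrow> 'a::comm_ring \<Rightarrow> 'a) \<Rightarrow> ('a \<Rightarrow> 'a \<Rightarrow> 'a) \<Rightarrow> bool" where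
  "poisson_algebra sc p \<longleftrightarrow> kalg sc \<and> kbilinear_on sc UNIV p \<and> poisson_bracket_on UNIV (+) (*) p 0"

definition poisson_morphism ::
  "('k::field_char_0 \<Rightarrow> 'a::comm_ring \<Rightarrow> 'a) \<Rightarrow> ('a \<Rightarrow> 'a \<Rightarrow> 'a) \<Rightarrow>
   ('k \<Rightarrow> 'b::comm_ring \<Rightarrow> 'b) \<Rightarrow> ('b \<Rightarrow> 'b \<Rightarrow> 'b) \<Rightarrow> ('a \<Rightarrow> 'b) \<Rightarrow> bool" where
  "poisson_morphism sc1 p sc2 q f \<longleftrightarrow> klinear_on sc1 sc2 UNIV f \<and>
     (\<forall>x y. f (x * y) = f x * f y) \<and> (\<forall>x y. f (p x y) = q (f x) (f y))"

definition poisson_commutant :: "('b \<Rightarrow> 'b \<Rightarrow> 'b::comm_ring) \<Rightarrow> ('a \<Rightarrow> 'b) \<Rightarrow> 'b set" where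
  "poisson_commutant s0 phi0 = {b. \<forall>a. s0 b (phi0 a) = 0}"

section \<open>Formal power series R[[lambda]] as coefficient sequences\<close>

definition fser :: "'a set \<Rightarrow> (nat \<Rightarrow> 'a) set" where
  "fser S = {f. \<forall>n. f n \<in> S}"

definition sadd :: "(nat \<Rightarrow> 'a::comm_ring) \<Rightarrow> (nat \<Rightarrow> 'a) \<Rightarrow> nat \<Rightarrow> 'a" where
  "sadd f g = (\<lambda>n. f n + g n)"

definition fsmul :: "(nat \<Rightarrow> 'a::comm_ring) \<Rightarrow> (nat \<Rightarrow> 'a) \<Rightarrow> nat \<Rightarrow> 'a" where
  "fsmul f g = (\<lambda>n. \<Sum>i\<le>n. f i * g (n - i))"

text \<open>The K[[lambda]]-bilinear bracket sum_k lambda^k p_k.\<close>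
definition dbr :: "(nat \<Rightarrow> 'a \<Rightarrow> 'a \<Rightarrow> 'a::comm_ring) \<Rightarrow> (nat \<Rightarrow> 'a) \<Rightarrow> (nat \<Rightarrow> 'a) \<Rightarrow> nat \<Rightarrow> 'a" where
  "dbr p f g = (\<lambda>n. \<Sum>k\<le>n. \<Sum>i\<le>n - k. p k (f i) (g (n - k - i)))"

text \<open>The K[[lambda]]-linear map sum_k lambda^k phi_k.\<close>
definition dmap :: "(nat \<Rightarrow> 'a \<Rightarrow> 'b::comm_ring) \<Rightarrow> (nat \<Rightarrow> 'a) \<Rightarrow> nat \<Rightarrow> 'b" where
  "dmap phi f = (\<lambda>n. \<Sum>k\<le>n. phi k (f (n - k)))"

text \<open>Formal Poisson deformation of the bracket p0 on the subalgebra S: a series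
  sum_k lambda^k p_k of K-bilinear maps S x S -> S with p_0 = p0 on S, whose
  K[[lambda]]-bilinear extension is a Poisson bracket on S[[lambda]].\<close>
definition formal_poisson_deformation ::
  "('k::field_char_0 \<Rightarrow> 'a::comm_ring \<Rightarrow> 'a) \<Rightarrow> 'a set \<Rightarrow> ('a \<Rightarrow> 'a \<Rightarrow> 'a) \<Rightarrow> (nat \<Rightarrow> 'a \<Rightarrow> 'a \<Rightarrow> 'a) \<Rightarrow> bool" where
  "formal_poisson_deformation sc S p0 p \<longleftrightarrow>
     (\<forall>k. kbilinear_on sc S (p k) \<and> (\<forall>x\<in>S. \<forall>y\<in>S. p k x y \<in> S)) \<and>
     (\<forall>x\<in>S. \<forall>y\<in>S. p 0 x y = p0 x y) \<and>
     poisson_bracket_on (fser S) sadd fsmul (dbr p) (\<lambda>_. 0)"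

definition series_poisson_morphism ::
  "('k::field_char_0 \<Rightarrow> 'a::comm_ring \<Rightarrow> 'a) \<Rightarrow> 'a set \<Rightarrow> (nat \<Rightarrow> 'a \<Rightarrow> 'a \<Rightarrow> 'a) \<Rightarrow>
   ('k \<Rightarrow> 'b::comm_ring \<Rightarrow> 'b) \<Rightarrow> 'b set \<Rightarrow> (nat \<Rightarrow> 'b \<Rightarrow> 'b \<Rightarrow> 'b) \<Rightarrow> (nat \<Rightarrow> 'a \<Rightarrow> 'b) \<Rightarrow> bool" where
  "series_poisson_morphism sc1 S1 p sc2 S2 q phi \<longleftrightarrow>
     (\<forall>k. klinear_on sc1 sc2 S1 (phi k) \<and> phi k ` S1 \<subseteq> S2) \<and>
     (\<forall>f\<in>fser S1. \<forall>g\<in>fser S1.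
        dmap phi (fsmul f g) = fsmul (dmap phi f) (dmap phi g) \<and>
        dmap phi (dbr p f g) = dbr q (dmap phi f) (dmap phi g))"

definition series_poisson_iso ::
  "('k::field_char_0 \<Rightarrow> 'a::comm_ring \<Rightarrow> 'a) \<Rightarrow> 'a set \<Rightarrow> (nat \<Rightarrow> 'a \<Rightarrow> 'a \<Rightarrow> 'a) \<Rightarrow>
   (nat \<Rightarrow> 'a \<Rightarrow> 'a \<Rightarrow> 'a) \<Rightarrow> (nat \<Rightarrow> 'a \<Rightarrow> 'a) \<Rightarrow> bool" where
  "series_poisson_iso sc S p q phi \<longleftrightarrow>
     series_poisson_morphism sc S p sc S q phi \<and> bij_betw (dmap phi) (fser S) (fser S)"

end

theory Submission
  imports Defs
begin


lemma sum_split0: "(\<Sum>k\<le>(n::nat). f k) = f 0 + (\<Sum>k\<in>{1..n}. (f k :: 'a::comm_monoid_add))"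
proof -
  have "{..n} = insert 0 {1..n}" by auto
  then show ?thesis by simp
qed

lemma reindex_tri:
  fixes F :: "nat \<Rightarrow> nat \<Rightarrow> 'a::comm_monoid_add"
  shows "(\<Sum>k\<le>n. \<Sum>l\<le>n-k. F k l) = (\<Sum>m\<le>n. \<Sum>j\<le>m. F j (m-j))"
proof -
  have "(\<Sum>k\<le>n. \<Sum>l\<le>n-k. F k l) = (\<Sum>(i,j)\<in>{(i,j). i+j \<le> n}. F i j)"
    by (simp add: pairs_le_eq_Sigma sum.Sigma)
  also have "\<dots> = (\<Sum>m\<le>n. \<Sum>j\<le>m. F j (m-j))"
    by (rule sum.triangle_reindex_eq)
  finally show ?thesis .
qed

lemma fser_UNIV[simp]: "fser UNIV = UNIV" by (simp add: fser_def)

function corr :: "(nat \<Rightarrow> 'b \<Rightarrow> 'b::comm_ring) \<Rightarrow> (nat \<Rightarrow> 'b) \<Rightarrow> nat \<Rightarrow> 'b" where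
  "corr P h n = h n - (\<Sum>j\<in>{1..n}. P j (corr P h (n - j)))"
  by pat_completeness auto
termination by (relation "measure (\<lambda>(P,h,n). n)") auto

declare corr.simps[simp del]

lemma sum_in:
  assumes "finite L" "\<forall>l\<in>L. x l \<in> T" "(0::'a::comm_monoid_add) \<in> T" "\<forall>a\<in>T. \<forall>b\<in>T. a + b \<in> T"
  shows "sum x L \<in> T"
  using assms by (induction L rule: finite_induct) auto

lemma add_sum:
  assumes "finite L" "\<forall>l\<in>L. x l \<in> T" "(0::'a::comm_monoid_add) \<in> T" "\<forall>a\<in>T. \<forall>b\<in>T. a + b \<in> T"
    and add: "\<forall>a\<in>T. \<forall>b\<in>T. f (a + b) = f a + (f b :: 'b::ab_group_add)"
  shows "f (sum x L) = (\<Sum>l\<in>L. f (x l))"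
  using assms(1,2)
proof (induction L rule: finite_induct)
  case empty
  have "f (0 + 0) = f 0 + f 0" using add assms(3) by blast
  then show ?case by simp
next
  case (insert a F)
  have "sum x F \<in> T" using sum_in[of F x T] insert assms(3,4) by blast
  then show ?case using insert add by simp
qed

lemma dmap_comp:
  fixes phi :: "nat \<Rightarrow> 'b::comm_ring \<Rightarrow> 'c::comm_ring" and chi :: "nat \<Rightarrow> 'a \<Rightarrow> 'b"
  assumes g: "\<forall>n. g n \<in> S" and chi: "\<forall>l. \<forall>x\<in>S. chi l x \<in> T"
    and add: "\<forall>j. \<forall>x\<in>T. \<forall>y\<in>T. phi j (x+y) = phi j x + phi j y"
    and T0: "0 \<in> T" and Tadd: "\<forall>x\<in>T. \<forall>y\<in>T. x+y \<in> T"
  shows "dmap phi (dmap chi g) = dmap (\<lambda>m b. \<Sum>j\<le>m. phi j (chi (m-j) b)) g"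
proof
  fix n
  have "dmap phi (dmap chi g) n = (\<Sum>k\<le>n. phi k (\<Sum>l\<le>n-k. chi l (g (n-k-l))))"
    by (simp add: dmap_def)
  also have "\<dots> = (\<Sum>k\<le>n. \<Sum>l\<le>n-k. phi k (chi l (g (n-k-l))))"
  proof (rule sum.cong[OF refl])
    fix k
    show "phi k (\<Sum>l\<le>n-k. chi l (g (n-k-l))) = (\<Sum>l\<le>n-k. phi k (chi l (g (n-k-l))))"
      by (rule add_sum[where T=T]) (use g chi add T0 Tadd in auto)
  qed
  also have "\<dots> = (\<Sum>m\<le>n. \<Sum>j\<le>m. phi j (chi (m-j) (g (n-j-(m-j)))))"
    by (rule reindex_tri)
  also have "\<dots> = (\<Sum>m\<le>n. \<Sum>j\<le>m. phi j (chi (m-j) (g (n-m))))"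
    by (intro sum.cong refl) auto
  also have "\<dots> = dmap (\<lambda>m b. \<Sum>j\<le>m. phi j (chi (m-j) b)) g n"
    by (simp add: dmap_def)
  finally show "dmap phi (dmap chi g) n = dmap (\<lambda>m b. \<Sum>j\<le>m. phi j (chi (m-j) b)) g n" .
qed

lemma dmap_inj:
  assumes id0: "\<forall>x\<in>A. P 0 x = x" and u: "u \<in> fser A" and u': "u' \<in> fser A"
    and eq: "dmap P u = (dmap P u' :: nat \<Rightarrow> 'b::comm_ring)"
  shows "u = u'"
proof
  fix n
  show "u n = u' n"
  proof (induction n rule: less_induct)
    case (less n)
    have "dmap P u n = dmap P u' n" using eq by simp
    then have "P 0 (u n) + (\<Sum>k\<in>{1..n}. P k (u (n-k))) = P 0 (u' n) + (\<Sum>k\<in>{1..n}. P k (u' (n-k)))"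
      by (simp add: dmap_def sum_split0)
    moreover have "(\<Sum>k\<in>{1..n}. P k (u (n-k))) = (\<Sum>k\<in>{1..n}. P k (u' (n-k)))"
      by (intro sum.cong refl) (use less in auto)
    ultimately have "P 0 (u n) = P 0 (u' n)" by simp
    then show ?case using id0 u u' by (simp add: fser_def)
  qed
qed

lemma low_term:
  fixes sig :: "nat \<Rightarrow> 'b \<Rightarrow> 'b \<Rightarrow> 'b::comm_ring"
  assumes w: "\<forall>i<m. w i = 0" and sz: "\<forall>k y. sig k 0 y = 0"
  shows "dbr sig w X m = sig 0 (w m) (X 0)"
proof -
  let ?C = "sig 0 (w m) (X 0)"
  have "dbr sig w X m = (\<Sum>k\<le>m. \<Sum>i\<le>m-k. sig k (w i) (X (m - k - i)))"
    by (simp add: dbr_def)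
  also have "\<dots> = (\<Sum>k\<le>m. \<Sum>i\<le>m-k. if k = 0 \<and> i = m then ?C else 0)"
  proof (intro sum.cong refl)
    fix k i assume k: "k \<in> {..m}" and i: "i \<in> {..m-k}"
    show "sig k (w i) (X (m - k - i)) = (if k = 0 \<and> i = m then ?C else 0)"
    proof (cases "i < m")
      case True then show ?thesis using w sz by auto
    next
      case False then have "i = m" "k = 0" using i k by auto
      then show ?thesis by simp
    qed
  qed
  also have "\<dots> = (\<Sum>k\<le>m. if k = 0 then ?C else 0)"
    by (intro sum.cong refl) auto
  also have "\<dots> = ?C" by simp
  finally show ?thesis .
qed

lemma pb_antisym0:
  assumes PB: "poisson_bracket_on (fser UNIV) sadd fsmul (dbr sig) (\<lambda>_. (0::'b::comm_ring))"
    and "dbr sig x y = (\<lambda>_. 0)"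
  shows "dbr sig y x = (\<lambda>_. 0)"
proof -
  have "sadd (dbr sig y x) (dbr sig x y) = (\<lambda>_. 0)"
    using PB unfolding poisson_bracket_on_def by simp
  then show ?thesis using assms(2) by (simp add: sadd_def)
qed

lemma pb_add1:
  assumes PB: "poisson_bracket_on (fser UNIV) sadd fsmul (dbr sig) (\<lambda>_. (0::'b::comm_ring))"
  shows "dbr sig (sadd x y) z = sadd (dbr sig x z) (dbr sig y z)"
  using PB unfolding poisson_bracket_on_def by simp

lemma corr_lemma:
  fixes Phi' :: "nat \<Rightarrow> 'b \<Rightarrow> 'b::comm_ring" and sig :: "nat \<Rightarrow> 'b \<Rightarrow> 'b \<Rightarrow> 'b"
    and h :: "nat \<Rightarrow> 'b" and phi0 :: "'a \<Rightarrow> 'b"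
  assumes id0: "\<forall>x\<in>A'. Phi' 0 x = x"
    and zA: "0 \<in> A'"
    and A'def: "A' = poisson_commutant brz phi0"
    and PB: "poisson_bracket_on (fser UNIV) sadd fsmul (dbr sig) (\<lambda>_. 0)"
    and sz: "\<forall>k y. sig k 0 y = 0"
    and s0: "\<forall>x y. sig 0 x y = brz x y"
    and hX: "\<forall>a. \<exists>X. X 0 = phi0 a \<and> dbr sig X h = (\<lambda>_. 0) \<and> (\<forall>v\<in>fser A'. dbr sig X (dmap Phi' v) = (\<lambda>_. 0))"
  shows "corr Phi' h \<in> fser A' \<and> dmap Phi' (corr Phi' h) = h"
proof -
  define c where "c = corr Phi' h"
  have crec: "c n = h n - (\<Sum>j\<in>{1..n}. Phi' j (c (n - j)))" for n
    unfolding c_def by (subst corr.simps) simp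
  have mem: "\<forall>m. c m \<in> A'"
  proof
    fix m
    show "c m \<in> A'"
    proof (induction m rule: less_induct)
      case (less m)
      define v where "v = (\<lambda>i. if i < m then c i else 0)"
      have v: "v \<in> fser A'" using less zA by (simp add: fser_def v_def)
      have lo: "dmap Phi' v i = h i" if "i < m" for i
      proof -
        have "dmap Phi' v i = (\<Sum>k\<le>i. Phi' k (c (i-k)))"
          unfolding dmap_def v_def using that by (intro sum.cong refl) auto
        also have "\<dots> = Phi' 0 (c i) + (\<Sum>k\<in>{1..i}. Phi' k (c (i-k)))"
          by (simp add: sum_split0)
        also have "\<dots> = h i"
        proof -
          have e: "Phi' 0 (c i) = c i" using id0 less that by simp
          show ?thesis unfolding e using crec[of i] by (metis diff_add_cancel)
        qed
        finally show ?thesis .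
      qed
      have mm: "dmap Phi' v m = h m - c m"
      proof -
        have "dmap Phi' v m = Phi' 0 (v m) + (\<Sum>k\<in>{1..m}. Phi' k (v (m-k)))"
          by (simp add: dmap_def sum_split0)
        also have "\<dots> = (\<Sum>k\<in>{1..m}. Phi' k (c (m-k)))"
          using id0 zA by (simp add: v_def)
        also have "\<dots> = h m - c m" using crec[of m] by simp
        finally show ?thesis .
      qed
      define w where "w = (\<lambda>i. h i - dmap Phi' v i)"
      have wlo: "\<forall>i<m. w i = 0" using lo by (simp add: w_def)
      have wm: "w m = c m" using mm by (simp add: w_def)
      have hw: "sadd w (dmap Phi' v) = h" by (simp add: sadd_def w_def)
      show ?case unfolding A'def poisson_commutant_def
      proof (intro CollectI allI)
        fix a
        obtain X where X0: "X 0 = phi0 a" and Xh: "dbr sig X h = (\<lambda>_. 0)"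
          and Xv: "\<forall>v\<in>fser A'. dbr sig X (dmap Phi' v) = (\<lambda>_. 0)"
          using hX by blast
        have hX0: "dbr sig h X = (\<lambda>_. 0)" using pb_antisym0[OF PB Xh] .
        have vX0: "dbr sig (dmap Phi' v) X = (\<lambda>_. 0)" using pb_antisym0[OF PB] Xv v by blast
        have "dbr sig h X = sadd (dbr sig w X) (dbr sig (dmap Phi' v) X)"
          using pb_add1[OF PB, of w "dmap Phi' v" X] hw by simp
        then have "dbr sig w X = (\<lambda>_. 0)" using hX0 vX0 by (simp add: sadd_def)
        then have "dbr sig w X m = 0" by simp
        then have "sig 0 (w m) (X 0) = 0" using low_term[of m w sig X, OF wlo sz] by simp
        then show "brz (c m) (phi0 a) = 0" using wm X0 s0 by simp
      qed
    qed
  qed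
  have "dmap Phi' c = h"
  proof
    fix n
    have "dmap Phi' c n = Phi' 0 (c n) + (\<Sum>k\<in>{1..n}. Phi' k (c (n-k)))"
      by (simp add: dmap_def sum_split0)
    also have "\<dots> = h n"
    proof -
      have e: "Phi' 0 (c n) = c n" using id0 mem by simp
      show ?thesis unfolding e using crec[of n] by (metis diff_add_cancel)
    qed
    finally show "dmap Phi' c n = h n" .
  qed
  then show ?thesis using mem unfolding c_def fser_def by simp
qed

lemma dmap_delta:
  assumes "\<forall>k. phi k 0 = (0::'b::comm_ring)"
  shows "dmap phi (\<lambda>i. if i = 0 then b else 0) = (\<lambda>n. phi n b)"
proof
  fix n
  have "dmap phi (\<lambda>i. if i = 0 then b else 0) n = (\<Sum>k\<le>n. if k = n then phi n b else 0)"
    unfolding dmap_def using assms by (intro sum.cong refl) auto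
  then show "dmap phi (\<lambda>i. if i = 0 then b else 0) n = phi n b" by simp
qed

lemma dmap_zero:
  assumes "\<forall>k. phi k 0 = (0::'b::comm_ring)"
  shows "dmap phi (\<lambda>_. 0) = (\<lambda>_. 0)"
  using assms by (simp add: dmap_def)

lemma fsmul_in:
  assumes "0 \<in> A" "\<forall>x\<in>A. \<forall>y\<in>A. x + y \<in> A" "\<forall>x\<in>A. \<forall>y\<in>A. x * y \<in> (A::'a::comm_ring set)"
    and "f \<in> fser A" "g \<in> fser A"
  shows "fsmul f g \<in> fser A"
  using assms unfolding fser_def fsmul_def by (auto intro!: sum_in[where T=A])

lemma dbr_in:
  assumes "0 \<in> A" "\<forall>x\<in>A. \<forall>y\<in>A. x + y \<in> A" "\<forall>k. \<forall>x\<in>A. \<forall>y\<in>A. p k x y \<in> (A::'a::comm_ring set)"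
    and "f \<in> fser A" "g \<in> fser A"
  shows "dbr p f g \<in> fser A"
  using assms unfolding fser_def dbr_def by (auto intro!: sum_in[where T=A])

lemma dmap_in:
  assumes "0 \<in> A" "\<forall>x\<in>A. \<forall>y\<in>A. x + y \<in> A" "\<forall>k. \<forall>x\<in>A. phi k x \<in> (A::'a::comm_ring set)"
    and "f \<in> fser A"
  shows "dmap phi f \<in> fser A"
  using assms unfolding fser_def dmap_def by (auto intro!: sum_in[where T=A])



theorem proposition3p13:
  fixes scA :: "'k::field_char_0 \<Rightarrow> 'a::comm_ring \<Rightarrow> 'a"
    and scB :: "'k \<Rightarrow> 'b::comm_ring \<Rightarrow> 'b"
    and pi0 :: "'a \<Rightarrow> 'a \<Rightarrow> 'a" and sigma0 :: "'b \<Rightarrow> 'b \<Rightarrow> 'b"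
    and phi0 :: "'a \<Rightarrow> 'b"
    and pi1 pi2 :: "nat \<Rightarrow> 'a \<Rightarrow> 'a \<Rightarrow> 'a"
    and sigma1 sigma2 :: "nat \<Rightarrow> 'b \<Rightarrow> 'b \<Rightarrow> 'b"
    and pi'1 pi'2 :: "nat \<Rightarrow> 'b \<Rightarrow> 'b \<Rightarrow> 'b"
    and Phi1 Phi2 :: "nat \<Rightarrow> 'a \<Rightarrow> 'b"
    and Phi'1 Phi'2 :: "nat \<Rightarrow> 'b \<Rightarrow> 'b"
    and psi :: "nat \<Rightarrow> 'a \<Rightarrow> 'a"
    and Psi :: "nat \<Rightarrow> 'b \<Rightarrow> 'b"
  defines "A' \<equiv> poisson_commutant sigma0 phi0"
  assumes A: "poisson_algebra scA pi0"
    and B: "poisson_algebra scB sigma0"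
    and phi0: "poisson_morphism scA pi0 scB sigma0 phi0"
    and def_pi1: "formal_poisson_deformation scA UNIV pi0 pi1"
    and def_pi2: "formal_poisson_deformation scA UNIV pi0 pi2"
    and def_sigma1: "formal_poisson_deformation scB UNIV sigma0 sigma1"
    and def_sigma2: "formal_poisson_deformation scB UNIV sigma0 sigma2"
    and def_pi'1: "formal_poisson_deformation scB A' sigma0 pi'1"
    and def_pi'2: "formal_poisson_deformation scB A' sigma0 pi'2"
    and Phi1: "series_poisson_morphism scA UNIV pi1 scB UNIV sigma1 Phi1"
    and Phi2: "series_poisson_morphism scA UNIV pi2 scB UNIV sigma2 Phi2"
    and Phi1_0: "\<forall>a. Phi1 0 a = phi0 a"
    and Phi2_0: "\<forall>a. Phi2 0 a = phi0 a"
    and Phi'1: "series_poisson_morphism scB A' pi'1 scB UNIV sigma1 Phi'1"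
    and Phi'2: "series_poisson_morphism scB A' pi'2 scB UNIV sigma2 Phi'2"
    and Phi'1_0: "\<forall>b\<in>A'. Phi'1 0 b = b"
    and Phi'2_0: "\<forall>b\<in>A'. Phi'2 0 b = b"
    and comm1: "\<forall>f\<in>fser UNIV. \<forall>g\<in>fser A'. dbr sigma1 (dmap Phi1 f) (dmap Phi'1 g) = (\<lambda>_. 0)"
    and comm2: "\<forall>f\<in>fser UNIV. \<forall>g\<in>fser A'. dbr sigma2 (dmap Phi2 f) (dmap Phi'2 g) = (\<lambda>_. 0)"
    and psi: "series_poisson_morphism scA UNIV pi1 scA UNIV pi2 psi"
    and psi_bij: "bij_betw (dmap psi) (fser UNIV) (fser UNIV)"
    and Psi: "series_poisson_morphism scB UNIV sigma1 scB UNIV sigma2 Psi"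
    and Psi_bij: "bij_betw (dmap Psi) (fser UNIV) (fser UNIV)"
    and intertwine: "\<forall>f\<in>fser UNIV. dmap Phi2 (dmap psi f) = dmap Psi (dmap Phi1 f)"
  shows "\<exists>psi' :: nat \<Rightarrow> 'b \<Rightarrow> 'b.
           series_poisson_morphism scB A' pi'1 scB A' pi'2 psi' \<and>
           bij_betw (dmap psi') (fser A') (fser A') \<and>
           (\<forall>g\<in>fser A'. dmap Phi'2 (dmap psi' g) = dmap Psi (dmap Phi'1 g))"
proof -
  have kalgB: "kalg scB" and bilB: "kbilinear_on scB UNIV sigma0"
    and pbB: "poisson_bracket_on UNIV (+) (*) sigma0 0"
    using B unfolding poisson_algebra_def by auto
  have modB: "module scB" using kalgB unfolding kalg_def by simp
  have s0add: "\<forall>x y z. sigma0 (x + y) z = sigma0 x z + sigma0 y z"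
    using bilB unfolding kbilinear_on_def by simp
  have s0sc: "\<forall>c x y. sigma0 (scB c x) y = scB c (sigma0 x y)"
    using bilB unfolding kbilinear_on_def by simp
  have s0anti: "\<forall>x y. sigma0 x y + sigma0 y x = 0"
    using pbB unfolding poisson_bracket_on_def by simp
  have s0leib: "\<forall>x y w. sigma0 x (y * w) = sigma0 x y * w + y * sigma0 x w"
    using pbB unfolding poisson_bracket_on_def by simp
  have s00: "sigma0 0 z = 0" for z
  proof -
    have "sigma0 (0 + 0) z = sigma0 0 z + sigma0 0 z" using s0add by blast
    then show ?thesis by simp
  qed
  have A'mem: "x \<in> A' \<longleftrightarrow> (\<forall>a. sigma0 x (phi0 a) = 0)" for x
    unfolding A'_def poisson_commutant_def by simp
  have A0: "0 \<in> A'" using s00 A'mem by simp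
  have Aadd: "\<forall>x\<in>A'. \<forall>y\<in>A'. x + y \<in> A'" using s0add A'mem by simp
  have Asc: "\<forall>c. \<forall>x\<in>A'. scB c x \<in> A'"
    using s0sc A'mem module.scale_zero_right[OF modB] by simp
  have Amul: "\<forall>x\<in>A'. \<forall>y\<in>A'. x * y \<in> A'"
  proof (intro ballI)
    fix x y assume x: "x \<in> A'" and y: "y \<in> A'"
    show "x * y \<in> A'" unfolding A'mem
    proof
      fix a :: 'a
      have sx: "sigma0 (phi0 a) x = 0" using s0anti[rule_format, of x "phi0 a"] x A'mem by simp
      have sy: "sigma0 (phi0 a) y = 0" using s0anti[rule_format, of y "phi0 a"] y A'mem by simp
      have "sigma0 (phi0 a) (x * y) = 0" using s0leib sx sy by simp
      then show "sigma0 (x * y) (phi0 a) = 0" using s0anti[rule_format, of "x*y" "phi0 a"] by simp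
    qed
  qed
  have sig1z: "\<forall>k y. sigma1 k 0 y = 0" and sig10: "\<forall>x y. sigma1 0 x y = sigma0 x y"
    and PB1: "poisson_bracket_on (fser UNIV) sadd fsmul (dbr sigma1) (\<lambda>_. 0)"
  proof -
    have bil: "\<forall>k. kbilinear_on scB UNIV (sigma1 k)"
      using def_sigma1 unfolding formal_poisson_deformation_def by simp
    show "\<forall>k y. sigma1 k 0 y = 0"
    proof (intro allI)
      fix k y
      have "sigma1 k (0 + 0) y = sigma1 k 0 y + sigma1 k 0 y"
        using bil unfolding kbilinear_on_def by blast
      then show "sigma1 k 0 y = 0" by simp
    qed
    show "\<forall>x y. sigma1 0 x y = sigma0 x y" "poisson_bracket_on (fser UNIV) sadd fsmul (dbr sigma1) (\<lambda>_. 0)"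
      using def_sigma1 unfolding formal_poisson_deformation_def by auto
  qed
  have sig2z: "\<forall>k y. sigma2 k 0 y = 0" and sig20: "\<forall>x y. sigma2 0 x y = sigma0 x y"
    and PB2: "poisson_bracket_on (fser UNIV) sadd fsmul (dbr sigma2) (\<lambda>_. 0)"
  proof -
    have bil: "\<forall>k. kbilinear_on scB UNIV (sigma2 k)"
      using def_sigma2 unfolding formal_poisson_deformation_def by simp
    show "\<forall>k y. sigma2 k 0 y = 0"
    proof (intro allI)
      fix k y
      have "sigma2 k (0 + 0) y = sigma2 k 0 y + sigma2 k 0 y"
        using bil unfolding kbilinear_on_def by blast
      then show "sigma2 k 0 y = 0" by simp
    qed
    show "\<forall>x y. sigma2 0 x y = sigma0 x y" "poisson_bracket_on (fser UNIV) sadd fsmul (dbr sigma2) (\<lambda>_. 0)"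
      using def_sigma2 unfolding formal_poisson_deformation_def by auto
  qed
  have pi'1A: "\<forall>k. \<forall>x\<in>A'. \<forall>y\<in>A'. pi'1 k x y \<in> A'"
    using def_pi'1 unfolding formal_poisson_deformation_def by simp
  have pi'2A: "\<forall>k. \<forall>x\<in>A'. \<forall>y\<in>A'. pi'2 k x y \<in> A'"
    using def_pi'2 unfolding formal_poisson_deformation_def by simp
  have Psi_add: "\<forall>k x y. Psi k (x + y) = Psi k x + Psi k y"
    and Psi_sc: "\<forall>k c x. Psi k (scB c x) = scB c (Psi k x)"
    and Psi_mul: "\<forall>f g. dmap Psi (fsmul f g) = fsmul (dmap Psi f) (dmap Psi g)"
    and Psi_br: "\<forall>f g. dmap Psi (dbr sigma1 f g) = dbr sigma2 (dmap Psi f) (dmap Psi g)"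
    using Psi unfolding series_poisson_morphism_def klinear_on_def by auto
  have Psi0: "\<forall>k. Psi k 0 = 0"
  proof
    fix k have "Psi k (0 + 0) = Psi k 0 + Psi k 0" using Psi_add by blast
    then show "Psi k 0 = 0" by simp
  qed
  have Psi_inj: "inj (dmap Psi)" using Psi_bij unfolding bij_betw_def by simp
  have Psi_surj: "surj (dmap Psi)" using Psi_bij unfolding bij_betw_def by simp
  have psi_surj: "surj (dmap psi)" using psi_bij unfolding bij_betw_def by simp
  have P1_add: "\<forall>k. \<forall>x\<in>A'. \<forall>y\<in>A'. Phi'1 k (x + y) = Phi'1 k x + Phi'1 k y"
    and P1_sc: "\<forall>k c. \<forall>x\<in>A'. Phi'1 k (scB c x) = scB c (Phi'1 k x)"
    and P1_mul: "\<forall>f\<in>fser A'. \<forall>g\<in>fser A'. dmap Phi'1 (fsmul f g) = fsmul (dmap Phi'1 f) (dmap Phi'1 g)"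
    and P1_br: "\<forall>f\<in>fser A'. \<forall>g\<in>fser A'. dmap Phi'1 (dbr pi'1 f g) = dbr sigma1 (dmap Phi'1 f) (dmap Phi'1 g)"
    using Phi'1 unfolding series_poisson_morphism_def klinear_on_def by auto
  have P2_add: "\<forall>k. \<forall>x\<in>A'. \<forall>y\<in>A'. Phi'2 k (x + y) = Phi'2 k x + Phi'2 k y"
    and P2_sc: "\<forall>k c. \<forall>x\<in>A'. Phi'2 k (scB c x) = scB c (Phi'2 k x)"
    and P2_mul: "\<forall>f\<in>fser A'. \<forall>g\<in>fser A'. dmap Phi'2 (fsmul f g) = fsmul (dmap Phi'2 f) (dmap Phi'2 g)"
    and P2_br: "\<forall>f\<in>fser A'. \<forall>g\<in>fser A'. dmap Phi'2 (dbr pi'2 f g) = dbr sigma2 (dmap Phi'2 f) (dmap Phi'2 g)"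
    using Phi'2 unfolding series_poisson_morphism_def klinear_on_def by auto
  have P1z: "\<forall>k. Phi'1 k 0 = 0"
  proof
    fix k have "Phi'1 k (0 + 0) = Phi'1 k 0 + Phi'1 k 0" using P1_add A0 by blast
    then show "Phi'1 k 0 = 0" by simp
  qed
  have P2z: "\<forall>k. Phi'2 k 0 = 0"
  proof
    fix k have "Phi'2 k (0 + 0) = Phi'2 k 0 + Phi'2 k 0" using P2_add A0 by blast
    then show "Phi'2 k 0 = 0" by simp
  qed
  define tau where "tau = (\<lambda>m b. \<Sum>j\<le>m. Psi j (Phi'1 (m - j) b))"
  define psi' where "psi' = (\<lambda>m b. corr Phi'2 (\<lambda>n. tau n b) m)"
  have tau0: "\<forall>k. tau k 0 = 0" using P1z Psi0 by (simp add: tau_def)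
  have deltaA: "(\<lambda>i. if i = 0 then b else 0) \<in> fser A'" if "b \<in> A'" for b
    using that A0 by (simp add: fser_def)
  have compPsi: "dmap Psi (dmap Phi'1 g) = dmap tau g" if "g \<in> fser A'" for g
    unfolding tau_def
    by (rule dmap_comp[where S=A' and T=UNIV]) (use that Psi_add in \<open>auto simp: fser_def\<close>)
  have X0: "dmap Ph (\<lambda>i. if i = 0 then a else 0) 0 = phi0 a" if "\<forall>a. Ph 0 a = phi0 a" for Ph :: "nat \<Rightarrow> 'a \<Rightarrow> 'b" and a
    using that by (simp add: dmap_def)
  have Gpsi: "(\<lambda>m. psi' m b) \<in> fser A' \<and> dmap Phi'2 (\<lambda>m. psi' m b) = (\<lambda>n. tau n b)" if b: "b \<in> A'" for b
    unfolding psi'_def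
  proof (rule corr_lemma[where A'=A' and brz=sigma0 and sig=sigma2])
    show "\<forall>x\<in>A'. Phi'2 0 x = x" using Phi'2_0 .
    show "0 \<in> A'" using A0 .
    show "A' = poisson_commutant sigma0 phi0" using A'_def by simp
    show "poisson_bracket_on (fser UNIV) sadd fsmul (dbr sigma2) (\<lambda>_. 0)" using PB2 .
    show "\<forall>k y. sigma2 k 0 y = 0" using sig2z .
    show "\<forall>x y. sigma2 0 x y = sigma0 x y" using sig20 .
    show "\<forall>a. \<exists>X. X 0 = phi0 a \<and> dbr sigma2 X (\<lambda>n. tau n b) = (\<lambda>_. 0) \<and>
             (\<forall>v\<in>fser A'. dbr sigma2 X (dmap Phi'2 v) = (\<lambda>_. 0))"
    proof
      fix a :: 'a
      let ?da = "\<lambda>i. if i = 0 then a else 0"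
      let ?db = "\<lambda>i. if i = 0 then b else 0"
      obtain f' where f': "dmap psi f' = ?da" using psi_surj by (metis surjD)
      have XX: "dmap Phi2 ?da = dmap Psi (dmap Phi1 f')"
        using intertwine f' by (metis UNIV_I fser_UNIV)
      have hh: "(\<lambda>n. tau n b) = dmap Psi (dmap Phi'1 ?db)"
        using compPsi[OF deltaA[OF b]] dmap_delta[of tau, OF tau0] by simp
      have "dbr sigma1 (dmap Phi1 f') (dmap Phi'1 ?db) = (\<lambda>_. 0)"
        using comm1 deltaA[OF b] by simp
      then have "dbr sigma2 (dmap Phi2 ?da) (\<lambda>n. tau n b) = (\<lambda>_. 0)"
        unfolding XX hh using Psi_br dmap_zero[of Psi, OF Psi0] by metis
      moreover have "\<forall>v\<in>fser A'. dbr sigma2 (dmap Phi2 ?da) (dmap Phi'2 v) = (\<lambda>_. 0)"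
        using comm2 by simp
      moreover have "dmap Phi2 ?da 0 = phi0 a" using X0 Phi2_0 by blast
      ultimately show "\<exists>X. X 0 = phi0 a \<and> dbr sigma2 X (\<lambda>n. tau n b) = (\<lambda>_. 0) \<and>
             (\<forall>v\<in>fser A'. dbr sigma2 X (dmap Phi'2 v) = (\<lambda>_. 0))" by blast
    qed
  qed
  have psi'A: "\<forall>k. \<forall>x\<in>A'. psi' k x \<in> A'" using Gpsi by (simp add: fser_def)
  have psi'rec: "psi' m b = tau m b - (\<Sum>j\<in>{1..m}. Phi'2 j (psi' (m - j) b))" for m b
    unfolding psi'_def by (subst corr.simps) simp
  have tau_add: "tau m (x + y) = tau m x + tau m y" if "x \<in> A'" "y \<in> A'" for m x y
    using that P1_add Psi_add by (simp add: tau_def sum.distrib)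
  have tau_sc: "tau m (scB c x) = scB c (tau m x)" if "x \<in> A'" for m c x
    using that P1_sc Psi_sc by (simp add: tau_def module.scale_sum_right[OF modB])
  have psi'_add: "psi' m (x + y) = psi' m x + psi' m y" if x: "x \<in> A'" and y: "y \<in> A'" for m x y
  proof (induction m rule: less_induct)
    case (less m)
    have "(\<Sum>j\<in>{1..m}. Phi'2 j (psi' (m - j) (x + y)))
        = (\<Sum>j\<in>{1..m}. Phi'2 j (psi' (m - j) x) + Phi'2 j (psi' (m - j) y))"
    proof (intro sum.cong refl)
      fix j assume "j \<in> {1..m}"
      then have "m - j < m" by auto
      then show "Phi'2 j (psi' (m - j) (x + y)) = Phi'2 j (psi' (m - j) x) + Phi'2 j (psi' (m - j) y)"
        using less P2_add psi'A x y by simp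
    qed
    then show ?case
      by (simp add: psi'rec[of m] tau_add[OF x y] sum.distrib algebra_simps)
  qed
  have psi'_sc: "psi' m (scB c x) = scB c (psi' m x)" if x: "x \<in> A'" for m c x
  proof (induction m rule: less_induct)
    case (less m)
    have "(\<Sum>j\<in>{1..m}. Phi'2 j (psi' (m - j) (scB c x)))
        = (\<Sum>j\<in>{1..m}. scB c (Phi'2 j (psi' (m - j) x)))"
    proof (intro sum.cong refl)
      fix j assume "j \<in> {1..m}"
      then have "m - j < m" by auto
      then show "Phi'2 j (psi' (m - j) (scB c x)) = scB c (Phi'2 j (psi' (m - j) x))"
        using less P2_sc psi'A x by simp
    qed
    then show ?case
      by (simp add: psi'rec[of m] tau_sc[OF x] module.scale_sum_right[OF modB]
          module.scale_right_diff_distrib[OF modB])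
  qed
  have mainEq: "dmap Phi'2 (dmap psi' g) = dmap Psi (dmap Phi'1 g)" if g: "g \<in> fser A'" for g
  proof -
    have "dmap Phi'2 (dmap psi' g) = dmap (\<lambda>m b. \<Sum>j\<le>m. Phi'2 j (psi' (m - j) b)) g"
      by (rule dmap_comp[where S=A' and T=A']) (use g psi'A P2_add A0 Aadd in \<open>auto simp: fser_def\<close>)
    also have "\<dots> = dmap tau g"
      unfolding dmap_def
    proof (intro ext sum.cong refl)
      fix n k
      have "g (n - k) \<in> A'" using g by (simp add: fser_def)
      then have "dmap Phi'2 (\<lambda>m. psi' m (g (n - k))) k = tau k (g (n - k))"
        using Gpsi by simp
      then show "(\<Sum>j\<le>k. Phi'2 j (psi' (k - j) (g (n - k)))) = tau k (g (n - k))"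
        by (simp add: dmap_def)
    qed
    also have "\<dots> = dmap Psi (dmap Phi'1 g)" using compPsi[OF g] by simp
    finally show ?thesis .
  qed
  have dpsiA: "dmap psi' g \<in> fser A'" if "g \<in> fser A'" for g
    using dmap_in[OF A0 Aadd] psi'A that by blast
  have P1_0: "\<forall>x\<in>A'. Phi'1 0 x = x" using Phi'1_0 .
  have inj2: "u = u'" if "u \<in> fser A'" "u' \<in> fser A'" "dmap Phi'2 u = dmap Phi'2 u'" for u u'
    using dmap_inj[of A' Phi'2, OF Phi'2_0] that by blast
  have morph: "series_poisson_morphism scB A' pi'1 scB A' pi'2 psi'"
    unfolding series_poisson_morphism_def
  proof (intro conjI allI ballI)
    fix k
    show "klinear_on scB scB A' (psi' k)"
      unfolding klinear_on_def using psi'_add psi'_sc by blast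
    show "psi' k ` A' \<subseteq> A'" using psi'A by blast
  next
    fix f g assume f: "f \<in> fser A'" and g: "g \<in> fser A'"
    have fg: "fsmul f g \<in> fser A'" using fsmul_in[OF A0 Aadd Amul f g] .
    have fg': "fsmul (dmap psi' f) (dmap psi' g) \<in> fser A'"
      using fsmul_in[OF A0 Aadd Amul dpsiA[OF f] dpsiA[OF g]] .
    have bfg: "dbr pi'1 f g \<in> fser A'" using dbr_in[OF A0 Aadd pi'1A f g] .
    have bfg': "dbr pi'2 (dmap psi' f) (dmap psi' g) \<in> fser A'"
      using dbr_in[OF A0 Aadd pi'2A dpsiA[OF f] dpsiA[OF g]] .
    show "dmap psi' (fsmul f g) = fsmul (dmap psi' f) (dmap psi' g)"
    proof (rule inj2[OF dpsiA[OF fg] fg'])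
      have "dmap Phi'2 (dmap psi' (fsmul f g)) = dmap Psi (dmap Phi'1 (fsmul f g))"
        using mainEq[OF fg] .
      also have "\<dots> = fsmul (dmap Psi (dmap Phi'1 f)) (dmap Psi (dmap Phi'1 g))"
        using P1_mul f g Psi_mul by simp
      also have "\<dots> = fsmul (dmap Phi'2 (dmap psi' f)) (dmap Phi'2 (dmap psi' g))"
        using mainEq f g by simp
      also have "\<dots> = dmap Phi'2 (fsmul (dmap psi' f) (dmap psi' g))"
        using P2_mul dpsiA f g by simp
      finally show "dmap Phi'2 (dmap psi' (fsmul f g)) = dmap Phi'2 (fsmul (dmap psi' f) (dmap psi' g))" .
    qed
    show "dmap psi' (dbr pi'1 f g) = dbr pi'2 (dmap psi' f) (dmap psi' g)"
    proof (rule inj2[OF dpsiA[OF bfg] bfg'])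
      have "dmap Phi'2 (dmap psi' (dbr pi'1 f g)) = dmap Psi (dmap Phi'1 (dbr pi'1 f g))"
        using mainEq[OF bfg] .
      also have "\<dots> = dbr sigma2 (dmap Psi (dmap Phi'1 f)) (dmap Psi (dmap Phi'1 g))"
        using P1_br f g Psi_br by simp
      also have "\<dots> = dbr sigma2 (dmap Phi'2 (dmap psi' f)) (dmap Phi'2 (dmap psi' g))"
        using mainEq f g by simp
      also have "\<dots> = dmap Phi'2 (dbr pi'2 (dmap psi' f) (dmap psi' g))"
        using P2_br dpsiA f g by simp
      finally show "dmap Phi'2 (dmap psi' (dbr pi'1 f g)) = dmap Phi'2 (dbr pi'2 (dmap psi' f) (dmap psi' g))" .
    qed
  qed
  have bij: "bij_betw (dmap psi') (fser A') (fser A')"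
    unfolding bij_betw_def
  proof (intro conjI)
    show "inj_on (dmap psi') (fser A')"
    proof (rule inj_onI)
      fix u u' assume u: "u \<in> fser A'" and u': "u' \<in> fser A'" and e: "dmap psi' u = dmap psi' u'"
      have "dmap Psi (dmap Phi'1 u) = dmap Psi (dmap Phi'1 u')"
        using mainEq[OF u] mainEq[OF u'] e by simp
      then have "dmap Phi'1 u = dmap Phi'1 u'" using Psi_inj by (simp add: inj_eq)
      then show "u = u'" using dmap_inj[of A' Phi'1, OF P1_0 u u'] by simp
    qed
    show "dmap psi' ` fser A' = fser A'"
    proof
      show "dmap psi' ` fser A' \<subseteq> fser A'" using dpsiA by blast
      show "fser A' \<subseteq> dmap psi' ` fser A'"
      proof
        fix g2 assume g2: "g2 \<in> fser A'"
        obtain h where h: "dmap Psi h = dmap Phi'2 g2" using Psi_surj by (metis surjD)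
        have G: "corr Phi'1 h \<in> fser A' \<and> dmap Phi'1 (corr Phi'1 h) = h"
        proof (rule corr_lemma[where A'=A' and brz=sigma0 and sig=sigma1])
          show "\<forall>x\<in>A'. Phi'1 0 x = x" using Phi'1_0 .
          show "0 \<in> A'" using A0 .
          show "A' = poisson_commutant sigma0 phi0" using A'_def by simp
          show "poisson_bracket_on (fser UNIV) sadd fsmul (dbr sigma1) (\<lambda>_. 0)" using PB1 .
          show "\<forall>k y. sigma1 k 0 y = 0" using sig1z .
          show "\<forall>x y. sigma1 0 x y = sigma0 x y" using sig10 .
          show "\<forall>a. \<exists>X. X 0 = phi0 a \<and> dbr sigma1 X h = (\<lambda>_. 0) \<and>
                 (\<forall>v\<in>fser A'. dbr sigma1 X (dmap Phi'1 v) = (\<lambda>_. 0))"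
          proof
            fix a :: 'a
            let ?da = "\<lambda>i. if i = 0 then a else 0"
            have XX: "dmap Phi2 (dmap psi ?da) = dmap Psi (dmap Phi1 ?da)"
              using intertwine by simp
            have "dmap Psi (dbr sigma1 (dmap Phi1 ?da) h) = dbr sigma2 (dmap Phi2 (dmap psi ?da)) (dmap Phi'2 g2)"
              using Psi_br XX h by simp
            also have "\<dots> = (\<lambda>_. 0)" using comm2 g2 by simp
            also have "\<dots> = dmap Psi (\<lambda>_. 0)" using dmap_zero[of Psi, OF Psi0] by simp
            finally have "dbr sigma1 (dmap Phi1 ?da) h = (\<lambda>_. 0)" using Psi_inj by (simp add: inj_eq)
            moreover have "\<forall>v\<in>fser A'. dbr sigma1 (dmap Phi1 ?da) (dmap Phi'1 v) = (\<lambda>_. 0)"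
              using comm1 by simp
            moreover have "dmap Phi1 ?da 0 = phi0 a" using X0 Phi1_0 by blast
            ultimately show "\<exists>X. X 0 = phi0 a \<and> dbr sigma1 X h = (\<lambda>_. 0) \<and>
                 (\<forall>v\<in>fser A'. dbr sigma1 X (dmap Phi'1 v) = (\<lambda>_. 0))" by blast
          qed
        qed
        define g1 where "g1 = corr Phi'1 h"
        have g1: "g1 \<in> fser A'" and hg1: "dmap Phi'1 g1 = h" using G by (auto simp: g1_def)
        have "dmap Phi'2 (dmap psi' g1) = dmap Phi'2 g2" using mainEq[OF g1] hg1 h by simp
        then have "dmap psi' g1 = g2" using inj2[OF dpsiA[OF g1] g2] by simp
        then show "g2 \<in> dmap psi' ` fser A'" using g1 by blast
      qed
    qed
  qed
  show ?thesis using morph bij mainEq by blast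
qed

end
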